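(* Suppose $H$ satisfies (B1) and (B2), and for $\alpha>0$ let $v^\alpha$ be the viscosity solution of (DP) (satisfying $|v^\alpha|\le M/\alpha$, $M:=\sup|H(\cdot,0,\cdot)|$). Then there exist constants $M_1,M_2>0$, independent of $\alpha$, such that for all $\alpha>0$, $x,y\in\mathbb{T}^d$ and $\xi\in I$, $$\Big|\int_I k(\xi,\eta)\big(v^\alpha(x,\xi)-v^\alpha(y,\eta)\big)\,d\eta\Big|\le M_1+M_2\|Dv^\alpha\|_{L^\infty(\mathbb{T}^d\times I)}.$$
   Context: $I\subset\mathbb{R}$ finite interval, $|I|=1$; $k$ Borel measurable on $I\times I$ with $0<k_0\le k\le k_1$. $H\in C(\mathbb{T}^d\times\mathbb{R}^d)\otimes\mathcal{B}(I)$ with $H(\cdot,p,\cdot)$ bounded for each $p$. (DP): $\alpha v(x,\xi)+H(x,Dv(x,\xi),\xi)+\int_I k(\xi,\eta)(v(x,\xi)-v(x,\eta))d\eta=0$ in $\mathbb{T}^d\times I$ in the viscosity sense. (B1): $C_1|p|^m-C_2\le H(x,p,\xi)$ for constants $C_1,C_2>0$, $m>1$. (B2): for each $R>0$ a modulus $\omega_R$ with $|H(x,p,\xi)-H(y,p,\xi)|\le\omega_R(|x-y|)$ for $|p|\le R$. $v^\alpha(\cdot,\xi)$ is Lipschitz for each $\xi$, uniformly in $\xi$ (for fixed $\alpha$), so $\|Dv^\alpha\|_{L^\infty}$ is finite. *)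

theory Defs
  imports "HOL-Analysis.Analysis"
begin

text \<open>Torus T^d is represented by Z^d-periodic objects on real^'d.\<close>
definition int_vec :: "real^'d \<Rightarrow> bool" where
  "int_vec z \<longleftrightarrow> (\<forall>i. z $ i \<in> \<int>)"

definition periodic_x :: "(real^'d \<Rightarrow> 'b) \<Rightarrow> bool" where
  "periodic_x f \<longleftrightarrow> (\<forall>x z. int_vec z \<longrightarrow> f (x + z) = f x)"

definition modulus :: "(real \<Rightarrow> real) \<Rightarrow> bool" where
  "modulus \<omega> \<longleftrightarrow> \<omega> 0 = 0 \<and> (\<forall>r\<ge>0. \<omega> r \<ge> 0) \<and> mono_on {0..} \<omega> \<and> (\<omega> \<longlongrightarrow> 0) (at_right 0)"

definition C1_grad :: "(real^'d \<Rightarrow> real) \<Rightarrow> (real^'d \<Rightarrow> real^'d) \<Rightarrow> bool" where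
  "C1_grad \<phi> D\<phi> \<longleftrightarrow> (\<forall>x. (\<phi> has_derivative (\<lambda>h. D\<phi> x \<bullet> h)) (at x)) \<and> continuous_on UNIV D\<phi>"

definition coupling :: "real set \<Rightarrow> (real \<Rightarrow> real \<Rightarrow> real) \<Rightarrow> (real^'d \<Rightarrow> real \<Rightarrow> real) \<Rightarrow> real^'d \<Rightarrow> real \<Rightarrow> real" where
  "coupling I k v x \<xi> = (LINT \<eta>:I|lborel. k \<xi> \<eta> * (v x \<xi> - v x \<eta>))"

definition visc_sol_DP :: "real \<Rightarrow> (real^'d \<Rightarrow> real^'d \<Rightarrow> real \<Rightarrow> real) \<Rightarrow> real set \<Rightarrow>
    (real \<Rightarrow> real \<Rightarrow> real) \<Rightarrow> (real^'d \<Rightarrow> real \<Rightarrow> real) \<Rightarrow> bool" where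
  "visc_sol_DP \<alpha> H I k v \<longleftrightarrow>
     (\<forall>\<xi>. periodic_x (\<lambda>x. v x \<xi>)) \<and>
     (\<forall>\<xi>\<in>I. continuous_on UNIV (\<lambda>x. v x \<xi>)) \<and>
     (\<forall>x. set_borel_measurable lborel I (v x)) \<and>
     (\<forall>\<xi>\<in>I. \<forall>\<phi> D\<phi> x0. C1_grad \<phi> D\<phi> \<longrightarrow>
        (\<exists>e>0. \<forall>y. dist y x0 < e \<longrightarrow> v y \<xi> - \<phi> y \<le> v x0 \<xi> - \<phi> x0) \<longrightarrow>
        \<alpha> * v x0 \<xi> + H x0 (D\<phi> x0) \<xi> + coupling I k v x0 \<xi> \<le> 0) \<and>
     (\<forall>\<xi>\<in>I. \<forall>\<phi> D\<phi> x0. C1_grad \<phi> D\<phi> \<longrightarrow>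
        (\<exists>e>0. \<forall>y. dist y x0 < e \<longrightarrow> v y \<xi> - \<phi> y \<ge> v x0 \<xi> - \<phi> x0) \<longrightarrow>
        \<alpha> * v x0 \<xi> + H x0 (D\<phi> x0) \<xi> + coupling I k v x0 \<xi> \<ge> 0)"

text \<open>Pointwise norm of the spatial gradient (0 where not differentiable; a null set).\<close>
definition grad_norm :: "(real^'d \<Rightarrow> real \<Rightarrow> real) \<Rightarrow> (real^'d) \<times> real \<Rightarrow> real" where
  "grad_norm v z = (if (\<lambda>x. v x (snd z)) differentiable (at (fst z))
      then onorm (frechet_derivative (\<lambda>x. v x (snd z)) (at (fst z))) else 0)"

text \<open>L-infinity norm of Dv on T^d x I (essential supremum w.r.t. Lebesgue measure;
  by periodicity the ess sup over R^d x I equals that over T^d x I).\<close>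
definition Linf_Dv :: "real set \<Rightarrow> (real^'d \<Rightarrow> real \<Rightarrow> real) \<Rightarrow> ereal" where
  "Linf_Dv I v = Inf {C. AE z in (lborel \<Otimes>\<^sub>M restrict_space lborel I). ereal (grad_norm v z) \<le> C}"

end

theory Submission
  imports Defs
begin


lemma integ_help:
  fixes g h :: "real \<Rightarrow> real"
  assumes gm: "g \<in> borel_measurable borel" and hm: "set_borel_measurable lborel {a..b} h"
    and gb: "\<forall>\<eta>\<in>{a..b}. \<bar>g \<eta>\<bar> \<le> G" and hb: "\<forall>\<eta>\<in>{a..b}. \<bar>h \<eta>\<bar> \<le> K"
  shows "set_integrable lborel {a..b} (\<lambda>\<eta>. g \<eta> * (c - h \<eta>))"
  unfolding set_integrable_def
proof (rule integrableI_bounded_set[where A="{a..b}" and B="G * (\<bar>c\<bar> + K)"])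
  have e: "(\<lambda>x. indicator {a..b} x *\<^sub>R (g x * (c - h x))) =
     (\<lambda>x. g x * (c * indicator {a..b} x - indicator {a..b} x *\<^sub>R h x))"
    by (auto simp: indicator_def fun_eq_iff)
  have "(\<lambda>x. indicator {a..b} x *\<^sub>R h x) \<in> borel_measurable lborel" using hm
    unfolding set_borel_measurable_def .
  then show "(\<lambda>x. indicator {a..b} x *\<^sub>R (g x * (c - h x))) \<in> borel_measurable lborel"
    unfolding e using gm by measurable
  show "{a..b} \<in> sets lborel" by simp
  show "emeasure lborel {a..b} < \<infinity>" by (simp add: emeasure_lborel_Icc_eq)
  show "AE x in lborel. x \<in> {a..b} \<longrightarrow> norm (indicator {a..b} x *\<^sub>R (g x * (c - h x))) \<le> G * (\<bar>c\<bar> + K)"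
  proof (rule AE_I2, rule impI)
    fix x assume x: "x \<in> {a..b}"
    have "\<bar>g x\<bar> * \<bar>c - h x\<bar> \<le> G * (\<bar>c\<bar> + K)"
      apply (rule mult_mono) using gb hb x by (auto simp: abs_triangle_ineq4 intro: order.trans[OF abs_triangle_ineq4])
    then show "norm (indicator {a..b} x *\<^sub>R (g x * (c - h x))) \<le> G * (\<bar>c\<bar> + K)"
      using x by (simp add: abs_mult)
  qed
  show "AE x in lborel. x \<notin> {a..b} \<longrightarrow> indicator {a..b} x *\<^sub>R (g x * (c - h x)) = 0"
    by auto
qed

lemma lint_shift:
  fixes f g :: "real \<Rightarrow> real"
  assumes ab: "b - a = 1" and fi: "set_integrable lborel {a..b} f" and gi: "set_integrable lborel {a..b} g"
    and le: "\<forall>\<eta>\<in>{a..b}. f \<eta> \<le> g \<eta> + c"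
  shows "(LINT \<eta>:{a..b}|lborel. f \<eta>) \<le> (LINT \<eta>:{a..b}|lborel. g \<eta>) + c"
proof -
  have ci: "set_integrable lborel {a..b} (\<lambda>_. c)"
    by (simp add: set_integrable_def emeasure_lborel_Icc_eq)
  have "(LINT \<eta>:{a..b}|lborel. f \<eta>) \<le> (LINT \<eta>:{a..b}|lborel. g \<eta> + c)"
    by (rule set_integral_mono[OF fi set_integral_add(1)[OF gi ci]]) (use le in auto)
  also have "\<dots> = (LINT \<eta>:{a..b}|lborel. g \<eta>) + (LINT \<eta>:{a..b}|lborel. c)"
    by (rule set_integral_add(2)[OF gi ci])
  also have "(LINT \<eta>:{a..b}|lborel. c) = c"
    using ab by (subst set_integral_const) (auto simp: emeasure_lborel_Icc_eq measure_lborel_Icc)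
  finally show ?thesis .
qed

lemma shift01:
  fixes u :: "real^'d"
  shows "\<exists>z. int_vec z \<and> (\<forall>i. 0 \<le> (u+z)$i \<and> (u+z)$i \<le> 1)"
proof (intro exI conjI allI)
  let ?z = "(\<chi> i. - of_int \<lfloor>u$i\<rfloor>) :: real^'d"
  show "int_vec ?z" unfolding int_vec_def by auto
  fix i
  show "0 \<le> (u + ?z)$i" by simp
  show "(u + ?z)$i \<le> 1" by simp linarith
qed

lemma periodic_attains:
  fixes f :: "real^'d \<Rightarrow> real"
  assumes p: "periodic_x f" and c: "continuous_on UNIV f"
  shows "\<exists>x0. \<forall>y. f y \<le> f x0" "\<exists>x1. \<forall>y. f x1 \<le> f y"
proof -
  let ?K = "cbox (0::real^'d) (\<chi> i. 1)"
  have K: "compact ?K" "?K \<noteq> {}" "continuous_on ?K f"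
  proof -
    have "(0::real^'d) \<in> ?K" by (auto simp: mem_box_cart)
    then show "compact ?K" "?K \<noteq> {}" "continuous_on ?K f" using c by (auto intro: continuous_on_subset)
  qed
  have sh: "\<exists>y'\<in>?K. f y = f y'" for y
  proof -
    obtain z where z: "int_vec z" "\<forall>i. 0 \<le> (y+z)$i \<and> (y+z)$i \<le> 1" using shift01 by blast
    show ?thesis using z p unfolding periodic_x_def by (intro bexI[of _ "y+z"]) (auto simp: mem_box_cart)
  qed
  obtain x0 where "x0 \<in> ?K" "\<forall>y\<in>?K. f y \<le> f x0" using continuous_attains_sup[OF K] by blast
  then show "\<exists>x0. \<forall>y. f y \<le> f x0" using sh by metis
  obtain x1 where "x1 \<in> ?K" "\<forall>y\<in>?K. f x1 \<le> f y" using continuous_attains_inf[OF K] by blast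
  then show "\<exists>x1. \<forall>y. f x1 \<le> f y" using sh by metis
qed

lemma solve_bound:
  fixes t a b c e m :: real
  assumes t0: "0 \<le> t" and a0: "0 \<le> a" and b0: "0 \<le> b" and c0: "0 < c" and e0: "0 \<le> e" and m1: "1 < m"
    and h: "t \<le> a + b * (c + e*t) powr (1/m)"
  shows "t \<le> a + b * max 1 ((c + e*a + e*b) powr (1/(m-1)))"
proof -
  define u where "u = c + e*t"
  define q where "q = u powr (1/m)"
  define P where "P = c + e*a + e*b"
  have u0: "0 < u" unfolding u_def using c0 e0 t0 by (simp add: add_pos_nonneg)
  have q0: "0 < q" unfolding q_def using u0 by simp
  have qm: "q powr m = u" unfolding q_def using u0 m1 by (simp add: powr_powr)
  have "q \<le> max 1 (P powr (1/(m-1)))"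
  proof (cases "q \<le> 1")
    case True then show ?thesis by simp
  next
    case False
    have "u \<le> c + e*(a + b*q)" unfolding u_def using h e0 unfolding q_def u_def
      by (simp add: mult_left_mono)
    also have "\<dots> \<le> P * q" using False a0 b0 c0 e0
    proof -
      have "c \<le> c*q" using False c0 by simp
      moreover have "e*a*1 \<le> (e*a)*q" using False e0 a0 by (intro mult_left_mono) auto
      ultimately show ?thesis unfolding P_def by (simp add: algebra_simps)
    qed
    finally have uP: "u \<le> P * q" .
    have "q powr m = q powr ((m-1) + 1)" by simp
    also have "\<dots> = q powr (m-1) * q" using q0 by (simp only: powr_add powr_one_gt_zero_iff) simp
    finally have "q powr (m-1) * q \<le> P * q" using qm uP by simp
    then have qq: "q powr (m-1) \<le> P" using q0 by simp
    have "q = (q powr (m-1)) powr (1/(m-1))" using q0 m1 by (simp add: powr_powr)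
    also have "\<dots> \<le> P powr (1/(m-1))" using qq m1 q0 by (intro powr_mono2) auto
    finally show ?thesis by simp
  qed
  then have "b * q \<le> b * max 1 (P powr (1/(m-1)))" using b0 by (intro mult_left_mono)
  then show ?thesis using h unfolding q_def u_def P_def by simp
qed

lemma grad_norm_nonneg: "0 \<le> grad_norm v z"
proof (cases "(\<lambda>x. v x (snd z)) differentiable (at (fst z))")
  case True
  then have "((\<lambda>x. v x (snd z)) has_derivative frechet_derivative (\<lambda>x. v x (snd z)) (at (fst z))) (at (fst z))"
    by (simp add: frechet_derivative_works[symmetric])
  then have "bounded_linear (frechet_derivative (\<lambda>x. v x (snd z)) (at (fst z)))"
    by (rule has_derivative_bounded_linear)
  then show ?thesis using True by (simp add: grad_norm_def onorm_pos_le)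
qed (simp add: grad_norm_def)

lemma Linf_nonneg:
  fixes v :: "real^'d \<Rightarrow> real \<Rightarrow> real"
  assumes ab: "a < b"
  shows "0 \<le> Linf_Dv {a..b} v"
  unfolding Linf_Dv_def
proof (rule Inf_greatest, clarify)
  fix C assume AEC: "AE z in (lborel \<Otimes>\<^sub>M restrict_space lborel {a..b}). ereal (grad_norm v z) \<le> C"
  let ?N = "lborel \<Otimes>\<^sub>M restrict_space lborel {a..b} :: ((real^'d) \<times> real) measure"
  show "0 \<le> C"
  proof (rule ccontr)
    assume "\<not> 0 \<le> C"
    then have "C < 0" by simp
    have nz: "False" if h: "ereal (grad_norm v z) \<le> C" for z
    proof -
      have "(0::ereal) \<le> ereal (grad_norm v z)" by (simp add: grad_norm_nonneg)
      then have "0 \<le> C" using h by (rule order_trans)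
      then show False using \<open>C < 0\<close> by simp
    qed
    have "AE z in ?N. False" using AEC by (rule eventually_mono) (rule nz)
    then have "ae_filter ?N = bot" using trivial_limit_def by blast
    then have z: "emeasure ?N (space ?N) = 0" by (simp add: ae_filter_eq_bot_iff)
    have sf: "sigma_finite_measure (restrict_space lborel {a..b})"
      by (rule sigma_finite_measure_restrict_space) (auto intro: sigma_finite_lborel)
    have sp: "space ?N = UNIV \<times> {a..b}" by (simp add: space_pair_measure space_restrict_space)
    have "emeasure ?N (UNIV \<times> {a..b}) = emeasure lborel (UNIV::(real^'d) set) * emeasure (restrict_space lborel {a..b}) {a..b}"
      by (rule sigma_finite_measure.emeasure_pair_measure_Times[OF sf]) (auto simp: sets_restrict_space)
    also have "\<dots> \<noteq> 0" using ab by (simp add: emeasure_restrict_space emeasure_lborel_Icc_eq)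
    finally show False using z sp by simp
  qed
qed



lemma phi_C1:
  fixes y :: "real^'d" and L' \<delta> :: real
  assumes "0 < \<delta>"
  shows "C1_grad (\<lambda>z. L' * sqrt ((z-y) \<bullet> (z-y) + \<delta>^2))
                 (\<lambda>z. (L' / sqrt ((z-y) \<bullet> (z-y) + \<delta>^2)) *\<^sub>R (z - y))"
  unfolding C1_grad_def
proof (intro conjI allI)
  fix x :: "real^'d"
  have pos: "0 < (x-y) \<bullet> (x-y) + \<delta>^2" using assms by (simp add: add_nonneg_pos)
  show "((\<lambda>z. L' * sqrt ((z-y) \<bullet> (z-y) + \<delta>^2)) has_derivative
        (\<lambda>h. (L' / sqrt ((x-y) \<bullet> (x-y) + \<delta>^2)) *\<^sub>R (x - y) \<bullet> h)) (at x)"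
    using pos
    apply (auto intro!: derivative_eq_intros simp: inner_commute)
    by (simp add: fun_eq_iff divide_inverse)
  show "continuous_on UNIV (\<lambda>z. (L' / sqrt ((z-y) \<bullet> (z-y) + \<delta>^2)) *\<^sub>R (z - y))"
  proof (intro continuous_intros ballI)
    fix z :: "real^'d"
    have "0 < (z-y) \<bullet> (z-y) + \<delta>^2" using assms by (simp add: add_nonneg_pos)
    then show "sqrt ((z-y) \<bullet> (z-y) + \<delta>^2) \<noteq> 0" by simp
  qed
qed

lemma visc_lip:
  fixes w :: "real^'d \<Rightarrow> real"
  assumes lip: "L-lipschitz_on UNIV w" and bnd: "\<forall>x. \<bar>w x\<bar> \<le> B"
    and C1: "0 < C1" and m: "1 < m" and A0: "0 \<le> A"
    and sub: "\<And>\<phi> D\<phi> z0. C1_grad \<phi> D\<phi> \<Longrightarrow> (\<forall>y. w y - \<phi> y \<le> w z0 - \<phi> z0) \<Longrightarrow>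
                C1 * norm (D\<phi> z0) powr m \<le> A"
  shows "w x - w y \<le> (2 * (A/C1) powr (1/m) + 1) * dist x y"
proof -
  define \<beta> where "\<beta> = (A/C1) powr (1/m)"
  define L' where "L' = 2 * \<beta> + 1"
  have \<beta>0: "0 \<le> \<beta>" unfolding \<beta>_def by simp
  have L'0: "0 < L'" unfolding L'_def using \<beta>0 by simp
  have L0: "0 \<le> L" using lip by (simp add: lipschitz_on_def)
  have Lw: "dist (w p) (w q) \<le> L * dist p q" for p q using lip by (simp add: lipschitz_on_def)
  have wc: "continuous_on UNIV w" using lip by (rule lipschitz_on_continuous_on)
  have B0: "0 \<le> B" using bnd by (meson abs_ge_zero order_trans)
  have key: "w x - w y \<le> L' * dist x y + L * \<delta>" if \<delta>0: "0 < \<delta>" for \<delta>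
  proof -
    define \<phi> where "\<phi> = (\<lambda>z. L' * sqrt ((z-y) \<bullet> (z-y) + \<delta>^2))"
    define D\<phi> where "D\<phi> = (\<lambda>z. (L' / sqrt ((z-y) \<bullet> (z-y) + \<delta>^2)) *\<^sub>R (z - y))"
    have C1g: "C1_grad \<phi> D\<phi>" unfolding \<phi>_def D\<phi>_def by (rule phi_C1[OF \<delta>0])
    have sq: "(z-y) \<bullet> (z-y) = (dist z y)^2" for z by (simp add: dist_norm power2_norm_eq_inner)
    have \<phi>eq: "\<phi> z = L' * sqrt ((dist z y)^2 + \<delta>^2)" for z unfolding \<phi>_def sq ..
    have \<phi>ge: "L' * dist z y \<le> \<phi> z" for z
      unfolding \<phi>eq using L'0 by (intro mult_left_mono) (auto intro: real_le_rsqrt)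
    have \<phi>le: "\<phi> z \<le> L' * (dist z y + \<delta>)" for z
    proof -
      have "sqrt ((dist z y)^2 + \<delta>^2) \<le> sqrt ((dist z y + \<delta>)^2)"
        using \<delta>0 by (intro real_sqrt_le_mono) (simp add: power2_sum)
      also have "\<dots> = dist z y + \<delta>" using \<delta>0 by simp
      finally show ?thesis unfolding \<phi>eq using L'0 by (intro mult_left_mono) auto
    qed
    have \<phi>y: "\<phi> y = L' * \<delta>" unfolding \<phi>eq using \<delta>0 by simp
    define R where "R = 2*B/L' + \<delta>"
    have R0: "0 \<le> R" unfolding R_def using B0 L'0 \<delta>0 by (simp add: add_nonneg_nonneg)
    have "\<exists>z0\<in>cball y R. \<forall>z\<in>cball y R. w z - \<phi> z \<le> w z0 - \<phi> z0"
    proof (rule continuous_attains_sup)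
      show "compact (cball y R)" by simp
      have "0 \<le> 2*B/L'" using B0 L'0 by simp
      then show "cball y R \<noteq> {}" unfolding R_def using \<delta>0 by simp
      have "continuous_on UNIV \<phi>" unfolding \<phi>_def by (intro continuous_intros)
      then show "continuous_on (cball y R) (\<lambda>z. w z - \<phi> z)"
        using wc by (intro continuous_intros) (auto intro: continuous_on_subset)
    qed
    then obtain z0 where z0: "z0 \<in> cball y R" and z0m: "\<forall>z\<in>cball y R. w z - \<phi> z \<le> w z0 - \<phi> z0" by blast
    have glob: "\<forall>z. w z - \<phi> z \<le> w z0 - \<phi> z0"
    proof
      fix z
      show "w z - \<phi> z \<le> w z0 - \<phi> z0"
      proof (cases "z \<in> cball y R")
        case True then show ?thesis using z0m by blast
      next
        case False
        then have "R < dist z y" by (simp add: dist_commute)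
        then have "L' * R \<le> L' * dist z y" using L'0 by simp
        moreover have "L' * R = 2*B + L'*\<delta>" unfolding R_def using L'0 by (simp add: field_simps)
        ultimately have "2*B + L'*\<delta> \<le> \<phi> z" using \<phi>ge[of z] by linarith
        moreover have "w z \<le> B" "- B \<le> w y" using bnd[rule_format, of z] bnd[rule_format, of y] by (auto simp: abs_le_iff)
        moreover have "w y - \<phi> y \<le> w z0 - \<phi> z0" using z0m R0 by simp
        ultimately show ?thesis using \<phi>y by linarith
      qed
    qed
    have subi: "C1 * norm (D\<phi> z0) powr m \<le> A" by (rule sub[OF C1g glob])
    define r where "r = dist z0 y"
    define s where "s = sqrt (r^2 + \<delta>^2)"
    have r0: "0 \<le> r" unfolding r_def by simp
    have s\<delta>: "\<delta> \<le> s" unfolding s_def using \<delta>0 by (intro real_le_rsqrt) simp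
    have s0: "0 < s" using s\<delta> \<delta>0 by simp
    have nD: "norm (D\<phi> z0) = L' * r / s"
      unfolding D\<phi>_def s_def r_def sq using L'0 by (simp add: dist_norm)
    have "norm (D\<phi> z0) powr m \<le> A / C1" using subi C1 by (simp add: field_simps)
    then have "(norm (D\<phi> z0) powr m) powr (1/m) \<le> (A/C1) powr (1/m)"
      using m by (intro powr_mono2) auto
    then have "norm (D\<phi> z0) \<le> \<beta>" unfolding \<beta>_def using m by (simp add: powr_powr)
    then have "L' * r / s \<le> \<beta>" using nD by simp
    then have "L' * r \<le> \<beta> * s" using s0 by (simp add: field_simps)
    then have "2 * (L' * r) \<le> 2 * \<beta> * s" by simp
    also have "\<dots> < L' * s" unfolding L'_def using s0 by simp
    finally have "2 * r < s" using L'0 by simp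
    then have "(2*r)^2 < s^2" using r0 by (intro power_strict_mono) auto
    also have "s^2 = r^2 + \<delta>^2" unfolding s_def by simp
    finally have "3 * r^2 < \<delta>^2" by (simp add: power_mult_distrib)
    moreover have "0 \<le> r^2" by simp
    ultimately have "r^2 < \<delta>^2" by linarith
    then have r\<delta>: "r < \<delta>" using \<delta>0 r0 by (simp add: power_less_imp_less_base)
    have "\<phi> z0 = L' * s" unfolding \<phi>eq s_def r_def ..
    then have "L' * \<delta> \<le> \<phi> z0" using s\<delta> L'0 by simp
    moreover have "w z0 - w y \<le> L * r" using Lw[of z0 y] unfolding r_def by (simp add: dist_real_def)
    moreover have "L * r \<le> L * \<delta>" using r\<delta> L0 by (simp add: mult_left_mono)
    moreover have "w x - \<phi> x \<le> w z0 - \<phi> z0" using glob by simp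
    moreover have "\<phi> x \<le> L' * (dist x y + \<delta>)" by (rule \<phi>le)
    ultimately show ?thesis by (simp add: algebra_simps)
  qed
  have "w x - w y \<le> L' * dist x y"
  proof (rule field_le_epsilon)
    fix e :: real assume e: "0 < e"
    have "0 < e / (L+1)" using e L0 by simp
    then have "w x - w y \<le> L' * dist x y + L * (e / (L+1))" by (rule key)
    also have "L * (e / (L+1)) \<le> e" using e L0 by (simp add: field_simps)
    finally show "w x - w y \<le> L' * dist x y + e" by simp
  qed
  then show ?thesis unfolding L'_def \<beta>_def .
qed



theorem mainTheorem6:
  fixes H :: "real^'d \<Rightarrow> real^'d \<Rightarrow> real \<Rightarrow> real"
    and k :: "real \<Rightarrow> real \<Rightarrow> real"
    and a b k0 k1 :: real
  defines "I \<equiv> {a..b}"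
  defines "M \<equiv> (SUP z\<in>(UNIV :: (real^'d) set) \<times> I. \<bar>H (fst z) 0 (snd z)\<bar>)"
  assumes I_len: "b - a = 1"
    and k_meas: "(\<lambda>p. k (fst p) (snd p)) \<in> borel_measurable (borel :: (real \<times> real) measure)"
    and k0_pos: "0 < k0"
    and k_bounds: "\<forall>\<xi>\<in>I. \<forall>\<eta>\<in>I. k0 \<le> k \<xi> \<eta> \<and> k \<xi> \<eta> \<le> k1"
    and H_cont: "\<forall>\<xi>\<in>I. continuous_on UNIV (\<lambda>(x, p). H x p \<xi>)"
    and H_meas: "\<forall>x p. set_borel_measurable lborel I (H x p)"
    and H_per: "\<forall>p \<xi>. periodic_x (\<lambda>x. H x p \<xi>)"
    and H_bdd: "\<forall>p. \<exists>C. \<forall>x. \<forall>\<xi>\<in>I. \<bar>H x p \<xi>\<bar> \<le> C"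
    and B1: "\<exists>C1 C2 m. C1 > 0 \<and> C2 > 0 \<and> m > 1 \<and>
               (\<forall>x p. \<forall>\<xi>\<in>I. C1 * norm p powr m - C2 \<le> H x p \<xi>)"
    and B2: "\<forall>R>0. \<exists>\<omega>. modulus \<omega> \<and>
               (\<forall>x y p. \<forall>\<xi>\<in>I. norm p \<le> R \<longrightarrow> \<bar>H x p \<xi> - H y p \<xi>\<bar> \<le> \<omega> (dist x y))"
  shows "\<exists>M1>0. \<exists>M2>0. \<forall>\<alpha>>0. \<forall>v.
           visc_sol_DP \<alpha> H I k v \<and>
           (\<forall>x. \<forall>\<xi>\<in>I. \<bar>v x \<xi>\<bar> \<le> M / \<alpha>) \<and>
           (\<exists>L. \<forall>\<xi>\<in>I. L-lipschitz_on UNIV (\<lambda>x. v x \<xi>))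
           \<longrightarrow> (\<forall>x y. \<forall>\<xi>\<in>I.
                 ereal \<bar>LINT \<eta>:I|lborel. k \<xi> \<eta> * (v x \<xi> - v y \<eta>)\<bar>
                   \<le> ereal M1 + ereal M2 * Linf_Dv I v)"
proof -
  obtain C1 C2 m where C1: "C1 > 0" and C2: "C2 > 0" and m: "m > 1"
    and B1': "\<forall>x p. \<forall>\<xi>\<in>I. C1 * norm p powr m - C2 \<le> H x p \<xi>" using B1 by blast
  have ab: "a < b" using I_len by simp
  have aI: "a \<in> I" unfolding I_def using ab by simp
  have k1: "0 \<le> k1" using k_bounds aI k0_pos by force
  have kb: "\<And>\<xi> \<eta>. \<xi> \<in> I \<Longrightarrow> \<eta> \<in> I \<Longrightarrow> 0 \<le> k \<xi> \<eta> \<and> k \<xi> \<eta> \<le> k1"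
    using k_bounds k0_pos by force
  obtain CH where CH: "\<forall>x. \<forall>\<xi>\<in>I. \<bar>H x 0 \<xi>\<bar> \<le> CH" using H_bdd by blast
  have Mbdd: "bdd_above ((\<lambda>z. \<bar>H (fst z) 0 (snd z)\<bar>) ` ((UNIV :: (real^'d) set) \<times> I))"
    using CH by (auto simp: bdd_above_def)
  have HM: "\<bar>H x 0 \<xi>\<bar> \<le> M" if "\<xi> \<in> I" for x \<xi>
    unfolding M_def using that by (intro cSUP_upper2[OF Mbdd, of "(x, \<xi>)"]) auto
  have M0: "0 \<le> M" using HM[OF aI, of 0] by linarith
  define D where "D = real CARD('d)"
  have D1: "1 \<le> D" unfolding D_def by simp
  define c0 where "c0 = (C2 + 3*M)/C1"
  define e0 where "e0 = k1/C1"
  define Ts where "Ts = D + 2*D * max 1 ((c0 + e0*D + e0*(2*D)) powr (1/(m-1)))"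
  define M1 where "M1 = 2*M + k1*Ts + 1"
  have Ts0: "0 \<le> Ts" unfolding Ts_def using D1 by (simp add: add_nonneg_nonneg)
  have M1pos: "0 < M1" unfolding M1_def using M0 k1 Ts0 by (simp add: add_nonneg_pos)
  have kmeas: "k \<xi> \<in> borel_measurable borel" for \<xi>
  proof -
    have "(\<lambda>p. k (fst p) (snd p)) \<in> borel_measurable (borel \<Otimes>\<^sub>M borel)"
      using k_meas by (simp add: borel_prod)
    from measurable_Pair2[OF this, of \<xi>] show ?thesis by simp
  qed
  show ?thesis
  proof (rule exI[of _ M1], intro conjI M1pos, rule exI[of _ "1::real"], intro conjI zero_less_one allI impI ballI)
    fix \<alpha> :: real and v :: "real^'d \<Rightarrow> real \<Rightarrow> real" and x y :: "real^'d" and \<xi> :: real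
    assume \<alpha>: "0 < \<alpha>" and hv: "visc_sol_DP \<alpha> H I k v \<and> (\<forall>x. \<forall>\<xi>\<in>I. \<bar>v x \<xi>\<bar> \<le> M / \<alpha>) \<and>
           (\<exists>L. \<forall>\<xi>\<in>I. L-lipschitz_on UNIV (\<lambda>x. v x \<xi>))" and \<xi>I: "\<xi> \<in> I"
    obtain Lv where lipv: "\<forall>\<xi>\<in>I. Lv-lipschitz_on UNIV (\<lambda>x. v x \<xi>)" using hv by blast
    have vb: "\<And>x \<xi>. \<xi> \<in> I \<Longrightarrow> \<bar>v x \<xi>\<bar> \<le> M / \<alpha>" using hv by blast
    have vis: "visc_sol_DP \<alpha> H I k v" using hv by blast
    have vper: "\<And>\<xi>. periodic_x (\<lambda>x. v x \<xi>)" and vcont: "\<And>\<xi>. \<xi> \<in> I \<Longrightarrow> continuous_on UNIV (\<lambda>x. v x \<xi>)"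
      and vmeas: "\<And>x. set_borel_measurable lborel I (v x)"
      using vis unfolding visc_sol_DP_def by blast+
    have vsub: "\<And>\<xi> \<phi> D\<phi> x0. \<xi> \<in> I \<Longrightarrow> C1_grad \<phi> D\<phi> \<Longrightarrow>
        (\<exists>e>0. \<forall>y. dist y x0 < e \<longrightarrow> v y \<xi> - \<phi> y \<le> v x0 \<xi> - \<phi> x0) \<Longrightarrow>
        \<alpha> * v x0 \<xi> + H x0 (D\<phi> x0) \<xi> + coupling I k v x0 \<xi> \<le> 0"
      using vis unfolding visc_sol_DP_def by blast
    have vsup: "\<And>\<xi> \<phi> D\<phi> x0. \<xi> \<in> I \<Longrightarrow> C1_grad \<phi> D\<phi> \<Longrightarrow>
        (\<exists>e>0. \<forall>y. dist y x0 < e \<longrightarrow> v y \<xi> - \<phi> y \<ge> v x0 \<xi> - \<phi> x0) \<Longrightarrow>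
        \<alpha> * v x0 \<xi> + H x0 (D\<phi> x0) \<xi> + coupling I k v x0 \<xi> \<ge> 0"
      using vis unfolding visc_sol_DP_def by blast
    have av: "\<bar>\<alpha> * v x \<xi>\<bar> \<le> M" if "\<xi> \<in> I" for x \<xi>
    proof -
      have "\<alpha> * \<bar>v x \<xi>\<bar> \<le> \<alpha> * (M/\<alpha>)" using vb[OF that] \<alpha> by (intro mult_left_mono) auto
      then show ?thesis using \<alpha> by (simp add: abs_mult)
    qed
    define F where "F = (\<lambda>\<xi> x y. LINT \<eta>:I|lborel. k \<xi> \<eta> * (v x \<xi> - v y \<eta>))"
    have Fc: "coupling I k v x0 \<xi> = F \<xi> x0 x0" for x0 \<xi> unfolding coupling_def F_def ..
    define S where "S = {v x \<eta> - v y \<eta> | x y \<eta>. \<eta> \<in> I}"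
    define \<Theta> where "\<Theta> = Sup S"
    have Sbdd: "bdd_above S"
    proof (rule bdd_aboveI[of _ "2*M/\<alpha>"])
      fix s assume "s \<in> S"
      then obtain x y \<eta> where "s = v x \<eta> - v y \<eta>" "\<eta> \<in> I" unfolding S_def by blast
      then show "s \<le> 2*M/\<alpha>" using vb[of \<eta> x] vb[of \<eta> y] by (auto simp: abs_le_iff)
    qed
    have Sel: "\<And>x y \<eta>. \<eta> \<in> I \<Longrightarrow> v x \<eta> - v y \<eta> \<le> \<Theta>"
      unfolding \<Theta>_def by (rule cSup_upper[OF _ Sbdd]) (auto simp: S_def)
    have \<Theta>0: "0 \<le> \<Theta>" using Sel[OF aI, of 0 0] by simp
    have integ: "set_integrable lborel I (\<lambda>\<eta>. k \<xi> \<eta> * (v x \<xi> - v y \<eta>))" if "\<xi> \<in> I" for \<xi> x y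
      unfolding I_def
    proof (rule integ_help[where G=k1 and K="M/\<alpha>"])
      show "k \<xi> \<in> borel_measurable borel" by (rule kmeas)
      show "set_borel_measurable lborel {a..b} (v y)" using vmeas unfolding I_def .
      show "\<forall>\<eta>\<in>{a..b}. \<bar>k \<xi> \<eta>\<bar> \<le> k1" using kb[OF that] unfolding I_def by fastforce
      show "\<forall>\<eta>\<in>{a..b}. \<bar>v y \<eta>\<bar> \<le> M / \<alpha>" using vb unfolding I_def by blast
    qed
    have Fb: "F \<xi> x y \<le> 2*M + k1*\<Theta> \<and> - 2*M - k1*\<Theta> \<le> F \<xi> x y" if \<xi>I: "\<xi> \<in> I" for \<xi> x y
    proof -
      obtain x0 where x0: "\<forall>y. v y \<xi> \<le> v x0 \<xi>"
        using periodic_attains(1)[OF vper vcont[OF \<xi>I]] by blast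
      obtain x1 where x1: "\<forall>y. v x1 \<xi> \<le> v y \<xi>"
        using periodic_attains(2)[OF vper vcont[OF \<xi>I]] by blast
      have C0: "C1_grad (\<lambda>_. 0) (\<lambda>_. 0 :: real^'d)"
      proof -
        have e: "(\<lambda>h. (0::real^'d) \<bullet> h) = (\<lambda>_. 0)" by (simp add: fun_eq_iff)
        show ?thesis unfolding C1_grad_def e by simp
      qed
      have "\<alpha> * v x0 \<xi> + H x0 0 \<xi> + coupling I k v x0 \<xi> \<le> 0"
        by (rule vsub[OF \<xi>I C0, of x0, simplified]) (use x0 in \<open>auto intro: exI[of _ 1]\<close>)
      then have F0: "F \<xi> x0 x0 \<le> 2*M" using av[OF \<xi>I, of x0] HM[OF \<xi>I, of x0] Fc by (auto simp: abs_le_iff)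
      have "\<alpha> * v x1 \<xi> + H x1 0 \<xi> + coupling I k v x1 \<xi> \<ge> 0"
        by (rule vsup[OF \<xi>I C0, of x1, simplified]) (use x1 in \<open>auto intro: exI[of _ 1]\<close>)
      then have F1: "- 2*M \<le> F \<xi> x1 x1" using av[OF \<xi>I, of x1] HM[OF \<xi>I, of x1] Fc by (auto simp: abs_le_iff)
      have "F \<xi> x y \<le> F \<xi> x0 x0 + k1*\<Theta>"
        unfolding F_def I_def
      proof (rule lint_shift[OF I_len])
        show "set_integrable lborel {a..b} (\<lambda>\<eta>. k \<xi> \<eta> * (v x \<xi> - v y \<eta>))" using integ[OF \<xi>I] unfolding I_def .
        show "set_integrable lborel {a..b} (\<lambda>\<eta>. k \<xi> \<eta> * (v x0 \<xi> - v x0 \<eta>))" using integ[OF \<xi>I] unfolding I_def .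
        show "\<forall>\<eta>\<in>{a..b}. k \<xi> \<eta> * (v x \<xi> - v y \<eta>) \<le> k \<xi> \<eta> * (v x0 \<xi> - v x0 \<eta>) + k1 * \<Theta>"
        proof
          fix \<eta> assume "\<eta> \<in> {a..b}"
          then have \<eta>I: "\<eta> \<in> I" unfolding I_def .
          have "k \<xi> \<eta> * (v x \<xi> - v y \<eta>) \<le> k \<xi> \<eta> * ((v x0 \<xi> - v x0 \<eta>) + \<Theta>)"
            using kb[OF \<xi>I \<eta>I] x0[rule_format, of x] Sel[OF \<eta>I, of x0 y] by (intro mult_left_mono) (auto simp: algebra_simps)
          also have "\<dots> = k \<xi> \<eta> * (v x0 \<xi> - v x0 \<eta>) + k \<xi> \<eta> * \<Theta>" by (simp add: algebra_simps)
          also have "k \<xi> \<eta> * \<Theta> \<le> k1 * \<Theta>" using kb[OF \<xi>I \<eta>I] \<Theta>0 by (intro mult_right_mono) auto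
          finally show "k \<xi> \<eta> * (v x \<xi> - v y \<eta>) \<le> k \<xi> \<eta> * (v x0 \<xi> - v x0 \<eta>) + k1 * \<Theta>" by simp
        qed
      qed
      moreover have "F \<xi> x1 x1 \<le> F \<xi> x y + k1*\<Theta>"
        unfolding F_def I_def
      proof (rule lint_shift[OF I_len])
        show "set_integrable lborel {a..b} (\<lambda>\<eta>. k \<xi> \<eta> * (v x \<xi> - v y \<eta>))" using integ[OF \<xi>I] unfolding I_def .
        show "set_integrable lborel {a..b} (\<lambda>\<eta>. k \<xi> \<eta> * (v x1 \<xi> - v x1 \<eta>))" using integ[OF \<xi>I] unfolding I_def .
        show "\<forall>\<eta>\<in>{a..b}. k \<xi> \<eta> * (v x1 \<xi> - v x1 \<eta>) \<le> k \<xi> \<eta> * (v x \<xi> - v y \<eta>) + k1 * \<Theta>"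
        proof
          fix \<eta> assume "\<eta> \<in> {a..b}"
          then have \<eta>I: "\<eta> \<in> I" unfolding I_def .
          have "k \<xi> \<eta> * (v x1 \<xi> - v x1 \<eta>) \<le> k \<xi> \<eta> * ((v x \<xi> - v y \<eta>) + \<Theta>)"
            using kb[OF \<xi>I \<eta>I] x1[rule_format, of x] Sel[OF \<eta>I, of y x1] by (intro mult_left_mono) (auto simp: algebra_simps)
          also have "\<dots> = k \<xi> \<eta> * (v x \<xi> - v y \<eta>) + k \<xi> \<eta> * \<Theta>" by (simp add: algebra_simps)
          also have "k \<xi> \<eta> * \<Theta> \<le> k1 * \<Theta>" using kb[OF \<xi>I \<eta>I] \<Theta>0 by (intro mult_right_mono) auto
          finally show "k \<xi> \<eta> * (v x1 \<xi> - v x1 \<eta>) \<le> k \<xi> \<eta> * (v x \<xi> - v y \<eta>) + k1 * \<Theta>" by simp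
        qed
      qed
      ultimately show ?thesis using F0 F1 by linarith
    qed
    define A where "A = C2 + 3*M + k1*\<Theta>"
    define L' where "L' = 2 * (A/C1) powr (1/m) + 1"
    have A0: "0 \<le> A" unfolding A_def using C2 M0 k1 \<Theta>0 by simp
    have L'0: "0 \<le> L'" unfolding L'_def by (simp add: add_nonneg_nonneg)
    have Lip: "v x \<eta> - v y \<eta> \<le> L' * dist x y" if \<eta>I: "\<eta> \<in> I" for x y \<eta>
      unfolding L'_def
    proof (rule visc_lip[where L=Lv and B="M/\<alpha>"])
      show "Lv-lipschitz_on UNIV (\<lambda>x. v x \<eta>)" using lipv \<eta>I by blast
      show "\<forall>x. \<bar>v x \<eta>\<bar> \<le> M / \<alpha>" using vb \<eta>I by blast
      show "0 < C1" "1 < m" "0 \<le> A" by (fact C1, fact m, fact A0)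
      fix \<phi> D\<phi> z0 assume g: "C1_grad \<phi> D\<phi>" and mx: "\<forall>y. v y \<eta> - \<phi> y \<le> v z0 \<eta> - \<phi> z0"
      have "\<alpha> * v z0 \<eta> + H z0 (D\<phi> z0) \<eta> + coupling I k v z0 \<eta> \<le> 0"
        by (rule vsub[OF \<eta>I g, of z0]) (use mx in \<open>auto intro: exI[of _ 1]\<close>)
      moreover have "C1 * norm (D\<phi> z0) powr m - C2 \<le> H z0 (D\<phi> z0) \<eta>" using B1' \<eta>I by blast
      moreover have "- 2*M - k1*\<Theta> \<le> F \<eta> z0 z0" using Fb[OF \<eta>I] by blast
      ultimately show "C1 * norm (D\<phi> z0) powr m \<le> A"
        unfolding A_def using av[OF \<eta>I, of z0] Fc by (auto simp: abs_le_iff)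
    qed
    have \<Theta>le: "\<Theta> \<le> L' * D"
      unfolding \<Theta>_def
    proof (rule cSup_least)
      show "S \<noteq> {}" unfolding S_def using aI by blast
      fix s assume "s \<in> S"
      then obtain x y \<eta> where s: "s = v x \<eta> - v y \<eta>" and \<eta>I: "\<eta> \<in> I" unfolding S_def by blast
      obtain z where z: "int_vec z" and zb: "\<forall>i. 0 \<le> (x - y + z)$i \<and> (x - y + z)$i \<le> 1"
        using shift01[of "x - y"] by blast
      have "int_vec (-z)" using z unfolding int_vec_def by simp
      then have vy: "v (y + (-z)) \<eta> = v y \<eta>" using vper[of \<eta>] unfolding periodic_x_def by blast
      have "dist x (y + (-z)) = norm (x - y + z)" by (simp add: dist_norm algebra_simps)
      also have "\<dots> \<le> (\<Sum>i\<in>UNIV. \<bar>(x - y + z)$i\<bar>)" by (rule norm_le_l1_cart)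
      also have "\<dots> \<le> (\<Sum>i\<in>(UNIV::'d set). 1)" using zb by (intro sum_mono) auto
      also have "\<dots> = D" unfolding D_def by simp
      finally have dd: "dist x (y + (-z)) \<le> D" .
      have "s = v x \<eta> - v (y + (-z)) \<eta>" using s vy by simp
      also have "\<dots> \<le> L' * dist x (y + (-z))" by (rule Lip[OF \<eta>I])
      also have "\<dots> \<le> L' * D" using dd L'0 by (intro mult_left_mono)
      finally show "s \<le> L' * D" .
    qed
    have AC: "A/C1 = c0 + e0*\<Theta>" unfolding A_def c0_def e0_def using C1 by (simp add: field_simps)
    have "\<Theta> \<le> D + 2*D * (c0 + e0*\<Theta>) powr (1/m)"
      using \<Theta>le unfolding L'_def AC by (simp add: algebra_simps)
    then have \<Theta>Ts: "\<Theta> \<le> Ts" unfolding Ts_def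
      using solve_bound[OF \<Theta>0 _ _ _ _ m, of D "2*D" c0 e0] D1 C1 C2 M0 k1
      unfolding c0_def e0_def by (simp add: add_pos_nonneg)
    have "\<bar>F \<xi> x y\<bar> \<le> 2*M + k1*\<Theta>" using Fb[OF \<xi>I, of x y] by (simp add: abs_le_iff)
    also have "\<dots> \<le> 2*M + k1*Ts" using \<Theta>Ts k1 by (simp add: mult_left_mono)
    also have "\<dots> \<le> M1" unfolding M1_def by simp
    finally have "ereal \<bar>F \<xi> x y\<bar> \<le> ereal M1" by simp
    also have "ereal M1 \<le> ereal M1 + ereal 1 * Linf_Dv I v"
      using Linf_nonneg[OF ab, of v] unfolding I_def by (simp add: add_increasing2)
    finally have "ereal \<bar>F \<xi> x y\<bar> \<le> ereal M1 + ereal 1 * Linf_Dv I v" .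
    then show "ereal \<bar>LINT \<eta>:I|lborel. k \<xi> \<eta> * (v x \<xi> - v y \<eta>)\<bar> \<le> ereal M1 + ereal 1 * Linf_Dv I v"
      unfolding F_def by simp
  qed
qed

end
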